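(* For all integers $n\ge 2$ and $1\le k<n$, the independence number of $G=H_B(n,k)$ is $\alpha(G)=\sum_{i=1}^n 2^{i-1}\binom{n}{i}-\binom{n}{k}$ (and $V_2$ is a maximum independent set).
   Context: Fix integers $n\ge 2$ and $1\le k<n$ and positive real numbers $x_1<x_2<\dots<x_n$. Let $\mathscr{B}_n=\{\pm x_1,\pm x_2,\dots,\pm x_{n-1},x_n\}$ (so $-x_n\notin\mathscr{B}_n$). Let $\phi(\mathscr{B}_n)$ be the family of all nonempty subsets $S\subseteq\mathscr{B}_n$ whose elements have pairwise distinct absolute values and whose element of largest absolute value is positive. Let $\mathscr{B}_n^+=\{x_1,\dots,x_n\}$, let $V_1$ be the set of all $k$-element subsets of $\mathscr{B}_n^+$, and let $V_2=\phi(\mathscr{B}_n)\setminus V_1$. For $A\in\phi(\mathscr{B}_n)$ put $A^\dagger=\{|a|:a\in A\}$. The bipartite Kneser B type-$k$ graph $H_B(n,k)$ is the simple graph with vertex set $V_1\cup V_2$ in which $X\in V_1$ and $Y\in V_2$ are adjacent if and only if $X\subseteq Y^\dagger$ or $Y^\dagger\subseteq X$, and there are no other edges. The independence number is the maximum size of a set of pairwise nonadjacent vertices. *)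

theory Defs
  imports Complex_Main
begin

definition Bset :: "(nat \<Rightarrow> real) \<Rightarrow> nat \<Rightarrow> real set" where
  "Bset x n = x ` {1..n} \<union> uminus ` x ` {1..n-1}"

definition Bplus :: "(nat \<Rightarrow> real) \<Rightarrow> nat \<Rightarrow> real set" where
  "Bplus x n = x ` {1..n}"

definition phiB :: "(nat \<Rightarrow> real) \<Rightarrow> nat \<Rightarrow> real set set" where
  "phiB x n = {S. S \<noteq> {} \<and> S \<subseteq> Bset x n \<and> inj_on abs S \<and>
      (\<exists>a\<in>S. a > 0 \<and> (\<forall>b\<in>S. \<bar>b\<bar> \<le> \<bar>a\<bar>))}"

definition dagger :: "real set \<Rightarrow> real set" where
  "dagger A = abs ` A"

definition V1 :: "(nat \<Rightarrow> real) \<Rightarrow> nat \<Rightarrow> nat \<Rightarrow> real set set" where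
  "V1 x n k = {S. S \<subseteq> Bplus x n \<and> card S = k}"

definition V2 :: "(nat \<Rightarrow> real) \<Rightarrow> nat \<Rightarrow> nat \<Rightarrow> real set set" where
  "V2 x n k = phiB x n - V1 x n k"

definition HB_vertices :: "(nat \<Rightarrow> real) \<Rightarrow> nat \<Rightarrow> nat \<Rightarrow> real set set" where
  "HB_vertices x n k = V1 x n k \<union> V2 x n k"

definition HB_adj :: "(nat \<Rightarrow> real) \<Rightarrow> nat \<Rightarrow> nat \<Rightarrow> real set \<Rightarrow> real set \<Rightarrow> bool" where
  "HB_adj x n k A B \<longleftrightarrow>
     (A \<in> V1 x n k \<and> B \<in> V2 x n k \<and> (A \<subseteq> dagger B \<or> dagger B \<subseteq> A)) \<or>
     (B \<in> V1 x n k \<and> A \<in> V2 x n k \<and> (B \<subseteq> dagger A \<or> dagger A \<subseteq> B))"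

definition indep_set :: "'a set \<Rightarrow> ('a \<Rightarrow> 'a \<Rightarrow> bool) \<Rightarrow> 'a set \<Rightarrow> bool" where
  "indep_set V E S \<longleftrightarrow> S \<subseteq> V \<and> (\<forall>a\<in>S. \<forall>b\<in>S. \<not> E a b)"

definition independence_number :: "'a set \<Rightarrow> ('a \<Rightarrow> 'a \<Rightarrow> bool) \<Rightarrow> nat" where
  "independence_number V E = Max (card ` {S. indep_set V E S})"

end

theory Submission imports Defs begin

definition enc :: "(nat \<Rightarrow> real) \<Rightarrow> nat set \<times> nat set \<Rightarrow> real set" where
  "enc x TN = x ` (fst TN - snd TN) \<union> uminus ` x ` snd TN"

locale hb =
  fixes x :: "nat \<Rightarrow> real" and n :: nat
  assumes n2: "n \<ge> 2" and pos: "\<And>i. 1 \<le> i \<Longrightarrow> i \<le> n \<Longrightarrow> x i > 0"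
  and mono: "\<And>i j. 1 \<le> i \<Longrightarrow> i < j \<Longrightarrow> j \<le> n \<Longrightarrow> x i < x j"
begin

lemma xpos: "i \<in> {1..n} \<Longrightarrow> x i > 0" using pos by auto

lemma xlt_iff: "i \<in> {1..n} \<Longrightarrow> j \<in> {1..n} \<Longrightarrow> x i < x j \<longleftrightarrow> i < j"
proof -
  assume a: "i \<in> {1..n}" "j \<in> {1..n}"
  show ?thesis
  proof
    assume "x i < x j"
    show "i < j"
    proof (rule ccontr)
      assume "\<not> i < j"
      then have "j = i \<or> j < i" by auto
      then show False using a mono[of j i] \<open>x i < x j\<close> by auto
    qed
  next
    assume "i < j" then show "x i < x j" using a mono by auto
  qed
qed

lemma xle_iff: "i \<in> {1..n} \<Longrightarrow> j \<in> {1..n} \<Longrightarrow> x i \<le> x j \<longleftrightarrow> i \<le> j"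
  using xlt_iff[of j i] by (auto simp: not_less[symmetric])

lemma xeq_iff: "i \<in> {1..n} \<Longrightarrow> j \<in> {1..n} \<Longrightarrow> x i = x j \<longleftrightarrow> i = j"
  using xle_iff[of i j] xle_iff[of j i] by auto

lemma xneg: "i \<in> {1..n} \<Longrightarrow> j \<in> {1..n} \<Longrightarrow> - x i \<noteq> x j"
  using xpos[of i] xpos[of j] by auto

lemma Bset_iff: "y \<in> Bset x n \<longleftrightarrow> (\<exists>i\<in>{1..n}. y = x i) \<or> (\<exists>i\<in>{1..n-1}. y = - x i)"
  by (auto simp: Bset_def)

definition D :: "(nat set \<times> nat set) set" where
  "D = Sigma (Pow {1..n} - {{}}) (\<lambda>T. Pow (T - {Max T}))"

lemma card_D: "card D = (\<Sum>i=1..n. 2^(i-1) * (n choose i))"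
proof -
  have "card D = (\<Sum>T\<in>Pow {1..n} - {{}}. card (Pow (T - {Max T})))"
    unfolding D_def by (rule card_SigmaI) (auto intro: finite_subset)
  also have "\<dots> = (\<Sum>T\<in>Pow {1..n} - {{}}. 2 ^ (card T - 1))"
  proof (rule sum.cong)
    fix T assume "T \<in> Pow {1..n} - {{}}"
    then have f: "finite T" "T \<noteq> {}" by (auto intro: finite_subset)
    then show "card (Pow (T - {Max T})) = 2 ^ (card T - 1)"
      by (simp add: card_Pow)
  qed simp
  also have "Pow {1..n} - {{}} = (\<Union>i\<in>{1..n}. {T. T \<subseteq> {1..n} \<and> card T = i})"
  proof (rule set_eqI, rule iffI)
    fix T assume "T \<in> Pow {1..n} - {{}}"
    then have "T \<subseteq> {1..n}" "T \<noteq> {}" by auto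
    moreover have "card T \<le> n" using card_mono[OF _ \<open>T \<subseteq> {1..n}\<close>] by auto
    moreover have "card T \<ge> 1" using \<open>T \<noteq> {}\<close> \<open>T \<subseteq> {1..n}\<close>
      by (meson card_0_eq finite_atLeastAtMost finite_subset less_one not_le)
    ultimately show "T \<in> (\<Union>i\<in>{1..n}. {T. T \<subseteq> {1..n} \<and> card T = i})" by auto
  qed auto
  also have "(\<Sum>T\<in>(\<Union>i\<in>{1..n}. {T. T \<subseteq> {1..n} \<and> card T = i}). 2 ^ (card T - 1))
     = (\<Sum>i=1..n. (\<Sum>T\<in>{T. T \<subseteq> {1..n} \<and> card T = i}. 2 ^ (card T - 1)))"
    by (rule sum.UNION_disjoint) auto
  also have "\<dots> = (\<Sum>i=1..n. 2^(i-1) * (n choose i))"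
  proof (rule sum.cong)
    fix i assume "i \<in> {1..n}"
    have "(\<Sum>T\<in>{T. T \<subseteq> {1..n} \<and> card T = i}. 2 ^ (card T - 1))
        = (\<Sum>T\<in>{T. T \<subseteq> {1..n} \<and> card T = i}. (2::nat) ^ (i - 1))"
      by (rule sum.cong) auto
    also have "\<dots> = 2^(i-1) * (n choose i)"
      using n_subsets[of "{1..n}" i] by simp
    finally show "(\<Sum>T\<in>{T. T \<subseteq> {1..n} \<and> card T = i}. 2 ^ (card T - 1)) = 2^(i-1) * (n choose i)" .
  qed simp
  finally show ?thesis .
qed

lemma D_mem: "(T, N) \<in> D \<longleftrightarrow> T \<subseteq> {1..n} \<and> T \<noteq> {} \<and> N \<subseteq> T - {Max T}"
  by (auto simp: D_def)

lemma enc_neg: "(T, N) \<in> D \<Longrightarrow> i \<in> {1..n} \<Longrightarrow> - x i \<in> enc x (T, N) \<longleftrightarrow> i \<in> N"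
proof -
  assume d: "(T, N) \<in> D" and i: "i \<in> {1..n}"
  then have TN: "T \<subseteq> {1..n}" "N \<subseteq> T" by (auto simp: D_mem)
  show ?thesis
  proof
    assume "- x i \<in> enc x (T, N)"
    then consider (a) j where "j \<in> T - N" "- x i = x j" | (b) j where "j \<in> N" "- x i = - x j"
      by (auto simp: enc_def)
    then show "i \<in> N"
    proof cases
      case a then show ?thesis using xneg[of i j] i TN by auto
    next
      case b then show ?thesis using xeq_iff[of i j] i TN by auto
    qed
  qed (auto simp: enc_def)
qed

lemma enc_pos: "(T, N) \<in> D \<Longrightarrow> i \<in> {1..n} \<Longrightarrow> x i \<in> enc x (T, N) \<longleftrightarrow> i \<in> T - N"
proof -
  assume d: "(T, N) \<in> D" and i: "i \<in> {1..n}"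
  then have TN: "T \<subseteq> {1..n}" "N \<subseteq> T" by (auto simp: D_mem)
  show ?thesis
  proof
    assume "x i \<in> enc x (T, N)"
    then consider (a) j where "j \<in> T - N" "x i = x j" | (b) j where "j \<in> N" "x i = - x j"
      by (auto simp: enc_def)
    then show "i \<in> T - N"
    proof cases
      case a then show ?thesis using xeq_iff[of i j] i TN by auto
    next
      case b then show ?thesis using xneg[of j i] i TN by auto
    qed
  qed (auto simp: enc_def)
qed

lemma enc_inj: "inj_on (enc x) D"
proof (rule inj_onI)
  fix p q assume p: "p \<in> D" and q: "q \<in> D" and e: "enc x p = enc x q"
  obtain T N where pe: "p = (T, N)" by (cases p)
  obtain T' N' where qe: "q = (T', N')" by (cases q)
  have s: "T \<subseteq> {1..n}" "N \<subseteq> T" "T' \<subseteq> {1..n}" "N' \<subseteq> T'" using p q pe qe by (auto simp: D_mem)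
  have "N = N'"
  proof (rule set_eqI)
    fix i show "i \<in> N \<longleftrightarrow> i \<in> N'"
      using enc_neg[of T N i] enc_neg[of T' N' i] p q pe qe e s by auto
  qed
  moreover have "T - N = T' - N'"
  proof (rule set_eqI)
    fix i show "i \<in> T - N \<longleftrightarrow> i \<in> T' - N'"
      using enc_pos[of T N i] enc_pos[of T' N' i] p q pe qe e s by auto
  qed
  ultimately have "T = T'" using s by blast
  then show "p = q" using pe qe \<open>N = N'\<close> by simp
qed

lemma enc_in_phiB: "p \<in> D \<Longrightarrow> enc x p \<in> phiB x n"
proof -
  assume p: "p \<in> D"
  obtain T N where pe: "p = (T, N)" by (cases p)
  have s: "T \<subseteq> {1..n}" "T \<noteq> {}" "N \<subseteq> T - {Max T}" using p pe by (auto simp: D_mem)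
  have fT: "finite T" using s(1) finite_subset by blast
  define m where "m = Max T"
  have mT: "m \<in> T" using fT s(2) m_def by simp
  have jm: "j \<in> T \<Longrightarrow> j \<le> m" for j using fT m_def by simp
  have mn: "m \<in> T - N" using s(3) mT m_def by auto
  have N1: "N \<subseteq> {1..n-1}"
  proof
    fix i assume "i \<in> N"
    then have "i \<in> T" "i \<noteq> m" "i \<le> m" using s(3) jm m_def by auto
    then show "i \<in> {1..n-1}" using s(1) mT by fastforce
  qed
  let ?S = "enc x (T, N)"
  have xmS: "x m \<in> ?S" using mn unfolding enc_def fst_conv snd_conv by (intro UnI1 imageI)
  then have ne: "?S \<noteq> {}" by blast
  have sub: "?S \<subseteq> Bset x n"
    unfolding enc_def snd_conv fst_conv Bset_def
  proof (intro Un_mono image_mono)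
    show "T - N \<subseteq> {1..n}" using s(1) by blast
    show "N \<subseteq> {1..n-1}" by (rule N1)
  qed
  have absS: "y \<in> ?S \<Longrightarrow> \<exists>j\<in>T. \<bar>y\<bar> = x j" for y
  proof -
    assume "y \<in> ?S"
    then consider (a) j where "j \<in> T - N" "y = x j" | (b) j where "j \<in> N" "y = - x j"
      by (auto simp: enc_def)
    then show ?thesis
    proof cases
      case a then have "j \<in> {1..n}" using s by blast
      then show ?thesis using a xpos[of j] by auto
    next
      case b then have "j \<in> {1..n}" "j \<in> T" using s by blast+
      then show ?thesis using b xpos[of j] by auto
    qed
  qed
  have inj: "inj_on abs ?S"
  proof (rule inj_onI)
    fix y z assume y: "y \<in> ?S" and z: "z \<in> ?S" and e: "\<bar>y\<bar> = \<bar>z\<bar>"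
    consider (pp) i j where "i \<in> T - N" "j \<in> T - N" "y = x i" "z = x j"
      | (pn) i j where "i \<in> T - N" "j \<in> N" "y = x i" "z = - x j"
      | (np) i j where "i \<in> N" "j \<in> T - N" "y = - x i" "z = x j"
      | (nn) i j where "i \<in> N" "j \<in> N" "y = - x i" "z = - x j"
      using y z by (auto simp: enc_def)
    then show "y = z"
    proof cases
      case pp
      then have "i \<in> {1..n}" "j \<in> {1..n}" using s by auto
      then have "x i = x j" using pp e xpos[of i] xpos[of j] by auto
      then show ?thesis using pp xeq_iff \<open>i \<in> {1..n}\<close> \<open>j \<in> {1..n}\<close> by auto
    next
      case pn
      then have "i \<in> {1..n}" "j \<in> {1..n}" using s by auto
      then have "x i = x j" using pn e xpos[of i] xpos[of j] by auto
      then show ?thesis using pn xeq_iff \<open>i \<in> {1..n}\<close> \<open>j \<in> {1..n}\<close> by auto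
    next
      case np
      then have "i \<in> {1..n}" "j \<in> {1..n}" using s by auto
      then have "x i = x j" using np e xpos[of i] xpos[of j] by auto
      then show ?thesis using np xeq_iff \<open>i \<in> {1..n}\<close> \<open>j \<in> {1..n}\<close> by auto
    next
      case nn
      then have "i \<in> {1..n}" "j \<in> {1..n}" using s by auto
      then have "x i = x j" using nn e xpos[of i] xpos[of j] by auto
      then show ?thesis using nn xeq_iff \<open>i \<in> {1..n}\<close> \<open>j \<in> {1..n}\<close> by auto
    qed
  qed
  note xmS
  moreover have "x m > 0" using mT s(1) xpos by auto
  moreover have "\<forall>b\<in>?S. \<bar>b\<bar> \<le> \<bar>x m\<bar>"
  proof
    fix b assume "b \<in> ?S"
    then obtain j where "j \<in> T" "\<bar>b\<bar> = x j" using absS by blast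
    have jn: "j \<in> {1..n}" using \<open>j \<in> T\<close> s(1) by (rule subsetD[rotated])
    have mn': "m \<in> {1..n}" using mT s(1) by (rule subsetD[rotated])
    have "j \<le> m" using jm \<open>j \<in> T\<close> by blast
    then have "x j \<le> x m" using xle_iff[OF jn mn'] by simp
    then show "\<bar>b\<bar> \<le> \<bar>x m\<bar>" using \<open>\<bar>b\<bar> = x j\<close> \<open>x m > 0\<close> by simp
  qed
  ultimately have ex: "\<exists>a\<in>?S. a > 0 \<and> (\<forall>b\<in>?S. \<bar>b\<bar> \<le> \<bar>a\<bar>)" by (intro bexI[of _ "x m"] conjI)
  have "enc x (T, N) \<in> phiB x n" unfolding phiB_def using ne sub inj ex by (intro CollectI conjI)
  then show ?thesis using pe by simp
qed

lemma phiB_in_enc: "S \<in> phiB x n \<Longrightarrow> S \<in> enc x ` D"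
proof -
  assume S: "S \<in> phiB x n"
  have Ssub: "S \<subseteq> Bset x n" and inj: "inj_on abs S" using S by (auto simp: phiB_def)
  obtain a where aS: "a \<in> S" and apos: "a > 0" and amax: "\<And>b. b \<in> S \<Longrightarrow> \<bar>b\<bar> \<le> \<bar>a\<bar>"
    using S unfolding phiB_def by blast
  have both: "i \<in> {1..n} \<Longrightarrow> x i \<in> S \<Longrightarrow> - x i \<in> S \<Longrightarrow> False" for i
  proof -
    assume i: "i \<in> {1..n}" and p: "x i \<in> S" and q: "- x i \<in> S"
    have "\<bar>x i\<bar> = \<bar>- x i\<bar>" by simp
    then have "x i = - x i" using inj_onD[OF inj _ p q] by blast
    then show False using xpos[OF i] by simp
  qed
  have "a \<in> Bset x n" using aS Ssub by blast
  then obtain m where m: "m \<in> {1..n}" and am: "a = x m"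
    using apos xpos unfolding Bset_iff by force
  define T where "T = {i\<in>{1..n}. x i \<in> S \<or> - x i \<in> S}"
  define N where "N = {i\<in>{1..n}. - x i \<in> S}"
  have mT: "m \<in> T" using m aS am T_def by blast
  have Tle: "i \<in> T \<Longrightarrow> i \<le> m" for i
  proof -
    assume "i \<in> T"
    then have i: "i \<in> {1..n}" and "x i \<in> S \<or> - x i \<in> S" by (auto simp: T_def)
    then have "x i \<le> x m" using amax[of "x i"] amax[of "- x i"] am xpos[OF i] xpos[OF m] by auto
    then show "i \<le> m" using xle_iff[OF i m] by simp
  qed
  have fT: "finite T" unfolding T_def by simp
  have MaxT: "Max T = m" using fT mT Tle by (intro Max_eqI) auto
  have TN: "(T, N) \<in> D"
    unfolding D_mem
  proof (intro conjI)
    show "T \<subseteq> {1..n}" by (auto simp: T_def)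
    show "T \<noteq> {}" using mT by blast
    show "N \<subseteq> T - {Max T}"
    proof
      fix i assume "i \<in> N"
      then have i: "i \<in> {1..n}" "- x i \<in> S" by (auto simp: N_def)
      then have "i \<in> T" by (auto simp: T_def)
      moreover have "i \<noteq> m" using both[OF i(1)] i(2) aS am by blast
      ultimately show "i \<in> T - {Max T}" using MaxT by simp
    qed
  qed
  have "S = enc x (T, N)"
  proof
    show "S \<subseteq> enc x (T, N)"
    proof
      fix y assume yS: "y \<in> S"
      then have "y \<in> Bset x n" using Ssub by blast
      then consider (p) i where "i \<in> {1..n}" "y = x i" | (q) i where "i \<in> {1..n-1}" "y = - x i"
        unfolding Bset_iff by blast
      then show "y \<in> enc x (T, N)"
      proof cases
        case p
        then have "i \<in> T - N" using yS both[of i] by (auto simp: T_def N_def)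
        then show ?thesis using p unfolding enc_def fst_conv snd_conv by blast
      next
        case q
        then have "i \<in> N" using yS by (auto simp: N_def)
        then show ?thesis using q unfolding enc_def fst_conv snd_conv by blast
      qed
    qed
  next
    show "enc x (T, N) \<subseteq> S"
    proof
      fix y assume "y \<in> enc x (T, N)"
      then consider (p) i where "i \<in> T - N" "y = x i" | (q) i where "i \<in> N" "y = - x i"
        unfolding enc_def fst_conv snd_conv by blast
      then show "y \<in> S"
      proof cases
        case p then show ?thesis by (auto simp: T_def N_def)
      next
        case q then show ?thesis by (auto simp: N_def)
      qed
    qed
  qed
  then show ?thesis using TN by blast
qed

lemma card_phiB: "card (phiB x n) = (\<Sum>i=1..n. 2^(i-1) * (n choose i))"
proof -
  have "enc x ` D = phiB x n" using enc_in_phiB phiB_in_enc by blast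
  then have "card (phiB x n) = card D" using card_image[OF enc_inj] by simp
  then show ?thesis using card_D by simp
qed

end

lemma phiB_intro: "S \<noteq> {} \<Longrightarrow> S \<subseteq> Bset x n \<Longrightarrow> inj_on abs S \<Longrightarrow> c \<in> S \<Longrightarrow> c > 0
   \<Longrightarrow> (\<And>z. z \<in> S \<Longrightarrow> \<bar>z\<bar> \<le> c) \<Longrightarrow> S \<in> phiB x n"
  unfolding phiB_def by (intro CollectI conjI bexI[of _ c]) auto

locale hbk = hb +
  fixes k :: nat
  assumes k1: "1 \<le> k" and kn: "k < n"
begin

lemma Bplus_pos: "y \<in> Bplus x n \<Longrightarrow> y > 0"
  using xpos unfolding Bplus_def by blast

lemma Bplus_sub: "Bplus x n \<subseteq> Bset x n"
  unfolding Bplus_def Bset_def by blast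

lemma card_Bplus: "card (Bplus x n) = n"
proof -
  have "inj_on x {1..n}" using xeq_iff by (intro inj_onI) blast
  then show ?thesis unfolding Bplus_def by (simp add: card_image)
qed

lemma card_V1: "card (V1 x n k) = n choose k"
  unfolding V1_def using n_subsets[of "Bplus x n" k] card_Bplus
  by (simp add: Bplus_def)

lemma V1_fin: "X \<in> V1 x n k \<Longrightarrow> finite X"
  unfolding V1_def Bplus_def by (auto intro: finite_subset)

lemma V1_ne: "X \<in> V1 x n k \<Longrightarrow> X \<noteq> {}"
  using k1 unfolding V1_def by auto

lemma V1_sub_phiB: "V1 x n k \<subseteq> phiB x n"
proof
  fix X assume X: "X \<in> V1 x n k"
  have fX: "finite X" and ne: "X \<noteq> {}" using V1_fin V1_ne X by auto
  have XB: "X \<subseteq> Bplus x n" using X unfolding V1_def by blast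
  have pos: "y \<in> X \<Longrightarrow> y > 0" for y using XB Bplus_pos by blast
  show "X \<in> phiB x n"
  proof (rule phiB_intro[of X _ _ "Max X"])
    show "X \<noteq> {}" by (rule ne)
    show "X \<subseteq> Bset x n" using XB Bplus_sub by blast
    show "inj_on abs X" using pos by (intro inj_onI) (metis abs_of_pos)
    show "Max X \<in> X" using fX ne by simp
    then show "Max X > 0" using pos by blast
    fix z assume "z \<in> X" then show "\<bar>z\<bar> \<le> Max X" using fX pos[of z] by simp
  qed
qed

lemma finite_phiB: "finite (phiB x n)"
proof -
  have "phiB x n \<subseteq> Pow (Bset x n)" unfolding phiB_def by blast
  moreover have "finite (Bset x n)" unfolding Bset_def by simp
  ultimately show ?thesis by (meson finite_Pow_iff finite_subset)
qed

lemma card_V2: "card (V2 x n k) = (\<Sum>i=1..n. 2^(i-1) * (n choose i)) - (n choose k)"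
  unfolding V2_def using card_Diff_subset[OF finite_subset[OF V1_sub_phiB finite_phiB] V1_sub_phiB]
    card_phiB card_V1 by simp


lemma V1_elem: "X \<in> V1 x n k \<Longrightarrow> y \<in> X \<Longrightarrow> \<exists>i\<in>{1..n}. y = x i"
  unfolding V1_def Bplus_def by blast

lemma V1_pos: "X \<in> V1 x n k \<Longrightarrow> y \<in> X \<Longrightarrow> y > 0"
  using V1_elem xpos by blast

lemma dagger_pos: "(\<And>y. y \<in> X \<Longrightarrow> y > 0) \<Longrightarrow> dagger X = X"
proof -
  assume h: "\<And>y. y \<in> X \<Longrightarrow> y > 0"
  have "abs ` X = (\<lambda>y. y) ` X" by (rule image_cong[OF refl]) (simp add: h abs_of_pos)
  then show ?thesis unfolding dagger_def by simp
qed

lemma neg_notin_V1: "X \<in> V1 x n k \<Longrightarrow> c < 0 \<Longrightarrow> c \<notin> X"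
proof
  assume "X \<in> V1 x n k" "c < 0" "c \<in> X"
  then have "c > 0" using V1_pos by blast
  then show False using \<open>c < 0\<close> by simp
qed

definition fm :: "real set \<Rightarrow> real set" where
  "fm X = (if k = 1 then (if X = {x n} then {x 1, x n} else {- the_elem X, x n})
           else insert (- Min X) (X - {Min X}))"

lemma fm_big:
  assumes X: "X \<in> V1 x n k" and k2: "k \<noteq> 1"
  shows "fm X \<in> V2 x n k" "dagger (fm X) = X"
proof -
  have fX: "finite X" and ne: "X \<noteq> {}" using X V1_fin V1_ne by auto
  have cX: "card X = k" using X unfolding V1_def by blast
  have fmX: "fm X = insert (- Min X) (X - {Min X})" using k2 unfolding fm_def by simp
  define a where "a = Min X"
  have aX: "a \<in> X" using fX ne a_def by simp
  have "card (X - {a}) = k - 1" using cX aX fX by simp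
  then have "X - {a} \<noteq> {}" using k1 k2 by (metis card.empty diff_is_0_eq le_antisym nat_le_linear)
  then obtain b where bX: "b \<in> X" and ba: "b \<noteq> a" by blast
  have "a \<le> b" using fX bX a_def by simp
  then have ab: "a < b" using ba by simp
  obtain i where i: "i \<in> {1..n}" and ai: "a = x i" using V1_elem[OF X aX] by blast
  obtain j where j: "j \<in> {1..n}" and bj: "b = x j" using V1_elem[OF X bX] by blast
  have "i < j" using xlt_iff[OF i j] ab ai bj by simp
  then have i1: "i \<in> {1..n-1}" using i j by auto
  have pos: "y \<in> X \<Longrightarrow> y > 0" for y using V1_pos[OF X] by blast
  have apos: "a > 0" using pos aX by blast
  have dg: "dagger (fm X) = X"
  proof -
    have "dagger (fm X) = insert \<bar>- a\<bar> (dagger (X - {a}))" unfolding fmX a_def dagger_def by simp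
    also have "dagger (X - {a}) = X - {a}" using pos by (intro dagger_pos) blast
    finally show ?thesis using apos aX by auto
  qed
  show "dagger (fm X) = X" by (rule dg)
  have "fm X \<in> phiB x n"
  proof (rule phiB_intro[of _ _ _ "Max X"])
    show "fm X \<noteq> {}" unfolding fmX by simp
    have "X \<subseteq> Bset x n" using X Bplus_sub unfolding V1_def by blast
    moreover have "- a \<in> Bset x n" using i1 ai unfolding Bset_def by blast
    ultimately show "fm X \<subseteq> Bset x n" unfolding fmX a_def[symmetric] by blast
    have "inj_on abs (insert (- a) (X - {a}))"
    proof (rule inj_onI)
      fix y z assume y: "y \<in> insert (- a) (X - {a})" and z: "z \<in> insert (- a) (X - {a})"
        and e: "\<bar>y\<bar> = \<bar>z\<bar>"
      have py: "y = - a \<or> (y \<in> X \<and> y \<noteq> a)" using y by blast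
      have pz: "z = - a \<or> (z \<in> X \<and> z \<noteq> a)" using z by blast
      show "y = z"
      proof (cases "y = - a")
        case True
        show ?thesis
        proof (rule ccontr)
          assume "y \<noteq> z"
          then have "z \<in> X" "z \<noteq> a" using pz True by auto
          then have "z > 0" using pos by blast
          then have "z = a" using e True apos by simp
          then show False using \<open>z \<noteq> a\<close> by blast
        qed
      next
        case False
        then have "y \<in> X" "y \<noteq> a" using py by auto
        then have yp: "y > 0" using pos by blast
        show ?thesis
        proof (cases "z = - a")
          case True
          then have "y = a" using e yp apos by simp
          then show ?thesis using \<open>y \<noteq> a\<close> by blast
        next
          case False
          then have "z \<in> X" using pz by auto
          then have "z > 0" using pos by blast
          then show ?thesis using e yp by simp
        qed
      qed
    qed
    then show "inj_on abs (fm X)" unfolding fmX a_def .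
    have "b \<le> Max X" using fX bX by simp
    then have "Max X \<noteq> a" using ab by simp
    moreover have "Max X \<in> X" using fX ne by simp
    ultimately show "Max X \<in> fm X" unfolding fmX a_def[symmetric] by simp
    then show "Max X > 0" using \<open>Max X \<in> X\<close> pos by blast
    fix z assume "z \<in> fm X"
    then have "\<bar>z\<bar> \<in> dagger (fm X)" unfolding dagger_def by blast
    then have "\<bar>z\<bar> \<in> X" using dg by simp
    then show "\<bar>z\<bar> \<le> Max X" using fX by simp
  qed
  moreover have "fm X \<notin> V1 x n k"
  proof
    assume "fm X \<in> V1 x n k"
    moreover have "- a \<in> fm X" unfolding fmX a_def by simp
    ultimately show False using neg_notin_V1[of "fm X" "- a"] apos by simp
  qed
  ultimately show "fm X \<in> V2 x n k" unfolding V2_def by blast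
qed


lemma V1_single: "k = 1 \<Longrightarrow> X \<in> V1 x n k \<Longrightarrow> \<exists>i\<in>{1..n}. X = {x i}"
proof -
  assume k: "k = 1" and X: "X \<in> V1 x n k"
  then have "card X = 1" unfolding V1_def by blast
  then obtain a where "X = {a}" by (rule card_1_singletonE)
  moreover then obtain i where "i \<in> {1..n}" "a = x i" using V1_elem[OF X] by blast
  ultimately show ?thesis by blast
qed

lemma x1n: "x 1 < x n" "1 \<in> {1..n}" "n \<in> {1..n}"
  using mono[of 1 n] n2 by auto

lemma fm_one:
  assumes X: "X \<in> V1 x n k" and k: "k = 1"
  shows "fm X \<in> V2 x n k" "X \<subseteq> dagger (fm X)"
proof -
  obtain i where i: "i \<in> {1..n}" and Xi: "X = {x i}" using V1_single[OF k X] by blast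
  have pn: "x n > 0" using xpos x1n by blast
  have p1: "x 1 > 0" using xpos x1n by blast
  have pi: "x i > 0" using xpos i by blast
  show "fm X \<in> V2 x n k" "X \<subseteq> dagger (fm X)"
  proof -
    have "fm X \<in> V2 x n k \<and> X \<subseteq> dagger (fm X)"
    proof (cases "i = n")
      case True
      then have fmX: "fm X = {x 1, x n}" unfolding fm_def using k Xi by simp
      have "fm X \<in> phiB x n"
      proof (rule phiB_intro[of _ _ _ "x n"])
        show "fm X \<noteq> {}" "x n \<in> fm X" "x n > 0" using fmX pn by auto
        show "fm X \<subseteq> Bset x n" unfolding fmX Bset_def using x1n by blast
        show "inj_on abs (fm X)" unfolding fmX using p1 pn x1n(1) by (auto simp: inj_on_def)
        fix z assume "z \<in> fm X" then show "\<bar>z\<bar> \<le> x n" using fmX p1 pn x1n(1) by auto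
      qed
      moreover have "fm X \<notin> V1 x n k"
      proof
        assume "fm X \<in> V1 x n k"
        then have "card (fm X) = 1" using k unfolding V1_def by blast
        moreover have "card (fm X) = 2" unfolding fmX using x1n(1) by simp
        ultimately show False by simp
      qed
      moreover have "X \<subseteq> dagger {x 1, x n}" unfolding Xi dagger_def using True pn by auto
      then have "X \<subseteq> dagger (fm X)" using fmX by simp
      ultimately show ?thesis unfolding V2_def by blast
    next
      case False
      have "X \<noteq> {x n}" using Xi False xeq_iff[OF i x1n(3)] by simp
      moreover have "the_elem X = x i" using Xi by simp
      ultimately have fmX: "fm X = {- x i, x n}" unfolding fm_def using k by simp
      have i1: "i \<in> {1..n-1}" using i False by auto
      have lt: "x i < x n" using xlt_iff[OF i x1n(3)] i False by auto
      have "fm X \<in> phiB x n"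
      proof (rule phiB_intro[of _ _ _ "x n"])
        show "fm X \<noteq> {}" "x n \<in> fm X" "x n > 0" using fmX pn by auto
        show "fm X \<subseteq> Bset x n" unfolding fmX Bset_def using x1n i1 by blast
        show "inj_on abs (fm X)" unfolding fmX using pi pn lt by (auto simp: inj_on_def)
        fix z assume "z \<in> fm X" then show "\<bar>z\<bar> \<le> x n" using fmX pi pn lt by auto
      qed
      moreover have "fm X \<notin> V1 x n k"
      proof
        assume "fm X \<in> V1 x n k"
        moreover have "- x i \<in> fm X" unfolding fmX by simp
        ultimately show False using neg_notin_V1[of "fm X" "- x i"] pi by simp
      qed
      moreover have "X \<subseteq> dagger {- x i, x n}" unfolding Xi dagger_def using pi by auto
      then have "X \<subseteq> dagger (fm X)" using fmX by simp
      ultimately show ?thesis unfolding V2_def by blast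
    qed
    then show "fm X \<in> V2 x n k" "X \<subseteq> dagger (fm X)" by auto
  qed
qed

lemma fm_good: "X \<in> V1 x n k \<Longrightarrow> fm X \<in> V2 x n k \<and> X \<subseteq> dagger (fm X)"
  using fm_one fm_big by (cases "k = 1") auto

lemma fm_single: "k = 1 \<Longrightarrow> i \<in> {1..n} \<Longrightarrow> fm {x i} = (if i = n then {x 1, x n} else {- x i, x n})"
proof -
  assume k: "k = 1" and i: "i \<in> {1..n}"
  show ?thesis
  proof (cases "i = n")
    case True then show ?thesis unfolding fm_def using k by simp
  next
    case False
    then have "{x i} \<noteq> {x n}" using xeq_iff[OF i x1n(3)] by simp
    then show ?thesis unfolding fm_def using k False by simp
  qed
qed

lemma fm_inj: "inj_on fm (V1 x n k)"
proof (rule inj_onI)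
  fix X Y assume X: "X \<in> V1 x n k" and Y: "Y \<in> V1 x n k" and e: "fm X = fm Y"
  show "X = Y"
  proof (cases "k = 1")
    case False
    have "X = dagger (fm X)" using fm_big(2)[OF X False] by (rule sym)
    also have "\<dots> = dagger (fm Y)" using e by (rule arg_cong)
    also have "\<dots> = Y" using fm_big(2)[OF Y False] .
    finally show ?thesis .
  next
    case k: True
    obtain i where i: "i \<in> {1..n}" and Xi: "X = {x i}" using V1_single[OF k X] by blast
    obtain j where j: "j \<in> {1..n}" and Yj: "Y = {x j}" using V1_single[OF k Y] by blast
    have pi: "x i > 0" "x j > 0" using xpos i j by auto
    have pn: "x n > 0" "x 1 > 0" using xpos x1n by auto
    have fX: "fm X = (if i = n then {x 1, x n} else {- x i, x n})"
      using fm_single[OF k i] Xi by simp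
    have fY: "fm Y = (if j = n then {x 1, x n} else {- x j, x n})"
      using fm_single[OF k j] Yj by simp
    show ?thesis
    proof (cases "i = n")
      case True
      show ?thesis
      proof (cases "j = n")
        case True then show ?thesis using \<open>i = n\<close> Xi Yj by simp
      next
        case False
        then have "{x 1, x n} = {- x j, x n}" using e fY fX \<open>i = n\<close> by simp
        then have "- x j \<in> {x 1, x n}" by blast
        then show ?thesis using pi pn by auto
      qed
    next
      case False
      show ?thesis
      proof (cases "j = n")
        case True
        then have "{- x i, x n} = {x 1, x n}" using e fY fX \<open>i \<noteq> n\<close> by simp
        then have "- x i \<in> {x 1, x n}" by blast
        then show ?thesis using pi pn by auto
      next
        case False
        then have "{- x i, x n} = {- x j, x n}" using e fX fY \<open>i \<noteq> n\<close> by simp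
        then have "- x i \<in> {- x j, x n}" by blast
        then have "x i = x j" using pi pn by auto
        then show ?thesis using Xi Yj by simp
      qed
    qed
  qed
qed


lemma V12_disj: "V1 x n k \<inter> V2 x n k = {}"
  unfolding V2_def by blast

lemma finite_V: "finite (HB_vertices x n k)"
proof -
  have "HB_vertices x n k \<subseteq> phiB x n" unfolding HB_vertices_def V2_def using V1_sub_phiB by blast
  then show ?thesis using finite_phiB finite_subset by blast
qed

lemma V2_indep: "indep_set (HB_vertices x n k) (HB_adj x n k) (V2 x n k)"
  unfolding indep_set_def
proof (intro conjI ballI)
  show "V2 x n k \<subseteq> HB_vertices x n k" unfolding HB_vertices_def by blast
  fix a b assume "a \<in> V2 x n k" "b \<in> V2 x n k"
  then have "a \<notin> V1 x n k" "b \<notin> V1 x n k" using V12_disj by blast+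
  then show "\<not> HB_adj x n k a b" unfolding HB_adj_def by blast
qed

lemma indep_bound:
  assumes S: "indep_set (HB_vertices x n k) (HB_adj x n k) S"
  shows "card S \<le> card (V2 x n k)"
proof -
  have SV: "S \<subseteq> V1 x n k \<union> V2 x n k" using S unfolding indep_set_def HB_vertices_def by blast
  have noadj: "a \<in> S \<Longrightarrow> b \<in> S \<Longrightarrow> \<not> HB_adj x n k a b" for a b using S unfolding indep_set_def by blast
  have fV: "finite (V1 x n k \<union> V2 x n k)" using finite_V unfolding HB_vertices_def .
  define S1 where "S1 = S \<inter> V1 x n k"
  define S2 where "S2 = S \<inter> V2 x n k"
  have fS1: "finite S1" and fS2: "finite S2" using fV SV unfolding S1_def S2_def by (auto intro: finite_subset)
  have "S = S1 \<union> S2" using SV unfolding S1_def S2_def by blast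
  moreover have "S1 \<inter> S2 = {}" using V12_disj unfolding S1_def S2_def by blast
  ultimately have cS: "card S = card S1 + card S2" using fS1 fS2 by (simp add: card_Un_disjoint)
  have injS1: "inj_on fm S1" using fm_inj unfolding S1_def by (rule inj_on_subset) blast
  have imV2: "fm ` S1 \<subseteq> V2 x n k" using fm_good unfolding S1_def by blast
  have disj: "fm ` S1 \<inter> S2 = {}"
  proof (rule ccontr)
    assume "fm ` S1 \<inter> S2 \<noteq> {}"
    then obtain X where X: "X \<in> S1" and fX: "fm X \<in> S2" by blast
    have X1: "X \<in> V1 x n k" and XS: "X \<in> S" using X unfolding S1_def by blast+
    have "fm X \<in> S" using fX unfolding S2_def by blast
    have "fm X \<in> V2 x n k \<and> X \<subseteq> dagger (fm X)" using fm_good[OF X1] .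
    then have "HB_adj x n k X (fm X)" unfolding HB_adj_def using X1 by blast
    then show False using noadj[OF XS \<open>fm X \<in> S\<close>] by blast
  qed
  have "card S = card (fm ` S1) + card S2" using cS card_image[OF injS1] by simp
  also have "\<dots> = card (fm ` S1 \<union> S2)" using disj fS1 fS2 by (simp add: card_Un_disjoint)
  also have "\<dots> \<le> card (V2 x n k)"
  proof (rule card_mono)
    show "finite (V2 x n k)" using fV by blast
    show "fm ` S1 \<union> S2 \<subseteq> V2 x n k" using imV2 unfolding S2_def by blast
  qed
  finally show ?thesis .
qed

lemma indnum: "independence_number (HB_vertices x n k) (HB_adj x n k) = card (V2 x n k)"
  unfolding independence_number_def
proof (rule Max_eqI)
  have "{S. indep_set (HB_vertices x n k) (HB_adj x n k) S} \<subseteq> Pow (HB_vertices x n k)"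
    unfolding indep_set_def by blast
  then show "finite (card ` {S. indep_set (HB_vertices x n k) (HB_adj x n k) S})"
    using finite_V by (meson finite_Pow_iff finite_imageI finite_subset)
  show "\<And>y. y \<in> card ` {S. indep_set (HB_vertices x n k) (HB_adj x n k) S} \<Longrightarrow> y \<le> card (V2 x n k)"
    using indep_bound by blast
  show "card (V2 x n k) \<in> card ` {S. indep_set (HB_vertices x n k) (HB_adj x n k) S}"
    using V2_indep by blast
qed

end

theorem mainTheorem2:
  fixes x :: "nat \<Rightarrow> real" and n k :: nat
  assumes "n \<ge> 2" and "1 \<le> k" and "k < n"
    and "\<And>i. 1 \<le> i \<Longrightarrow> i \<le> n \<Longrightarrow> x i > 0"
    and "\<And>i j. 1 \<le> i \<Longrightarrow> i < j \<Longrightarrow> j \<le> n \<Longrightarrow> x i < x j"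
  shows "independence_number (HB_vertices x n k) (HB_adj x n k)
           = (\<Sum>i=1..n. 2^(i-1) * (n choose i)) - (n choose k)
         \<and> indep_set (HB_vertices x n k) (HB_adj x n k) (V2 x n k)
         \<and> card (V2 x n k) = independence_number (HB_vertices x n k) (HB_adj x n k)"
proof -
  interpret hbk x n k using assms by unfold_locales auto
  show ?thesis using indnum card_V2 V2_indep by simp
qed

end
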